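(* Let $\mathbb{k}$ be a field of characteristic $0$ containing a primitive $n$-th root of unity $\omega$, let $H=T_{n^2}(\omega)$ be the Taft Hopf algebra, let $A=\mathbb{k}[z]/(z^n-\omega)$ with $u$ the image of $z$, let $a_i=(\omega-1)^i\omega^{i(i+1)/2}$, and let $$\rho(u)=\sum_{i=0}^{n-1}a_i\,x^ig^{-(i+1)}\otimes u^{i+1}\in H\otimes A .$$ Then for every $1\le s\le n$, in the algebra $H\otimes A$, $$\rho(u)^s=\sum_{k=0}^{n-1}a_k\Big(\sum_{\{0\le i_1,\dots,i_s\le k\ \mid\ \sum_{j=1}^s i_j=k\}}\omega^{\sum_{j=2}^s i_j(j-1)}\Big)\,x^kg^{-(k+s)}\otimes u^{k+s}.$$
   Context: The Taft Hopf algebra is $H=T_{n^2}(\omega)=\mathbb{k}\langle x,g\mid x^n=0,\ g^n=1,\ xg=\omega gx\rangle$ with $\Delta(g)=g\otimes g$, $\Delta(x)=x\otimes 1+g\otimes x$, $\epsilon(g)=1$, $\epsilon(x)=0$. $H\otimes A$ carries the tensor product algebra structure. *)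

theory Defs
  imports Main "HOL-Library.FuncSet"
begin

definition primitive_root :: "nat \<Rightarrow> 'k::field \<Rightarrow> bool" where
  "primitive_root n w \<longleftrightarrow> 0 < n \<and> w ^ n = 1 \<and> (\<forall>m. 0 < m \<and> m < n \<longrightarrow> w ^ m \<noteq> 1)"

text \<open>Concrete model of the Taft algebra H = T_{n^2}(w) via its basis x^i g^j (i,j < n):
  an element is its coefficient function p i j (zero outside i,j < n).
  Structure constants: x^i1 g^j1 * x^i2 g^j2 = w^(-j1*i2) x^(i1+i2) g^((j1+j2) mod n),
  where x^(i1+i2) = 0 if i1+i2 \<ge> n (from x g = w g x, g^n = 1, x^n = 0).\<close>
definition cH :: "nat \<Rightarrow> 'k::field \<Rightarrow> nat \<Rightarrow> nat \<Rightarrow> nat \<Rightarrow> nat \<Rightarrow> nat \<Rightarrow> nat \<Rightarrow> 'k" where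
  "cH n w i1 j1 i2 j2 i j =
     (if i1 + i2 = i \<and> (j1 + j2) mod n = j then (inverse w) ^ (j1 * i2) else 0)"

definition mulH :: "nat \<Rightarrow> 'k::field \<Rightarrow> (nat \<Rightarrow> nat \<Rightarrow> 'k) \<Rightarrow> (nat \<Rightarrow> nat \<Rightarrow> 'k) \<Rightarrow> (nat \<Rightarrow> nat \<Rightarrow> 'k)" where
  "mulH n w p q = (\<lambda>i j. if i < n \<and> j < n then
      (\<Sum>i1<n. \<Sum>j1<n. \<Sum>i2<n. \<Sum>j2<n. cH n w i1 j1 i2 j2 i j * p i1 j1 * q i2 j2) else 0)"

definition oneH :: "nat \<Rightarrow> nat \<Rightarrow> nat \<Rightarrow> 'k::field" where
  "oneH n = (\<lambda>i j. if i = 0 \<and> j = 0 then 1 else 0)"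

text \<open>Generators x, g and g^{-1} (= g^(n-1) since g^n = 1).\<close>
definition xH :: "nat \<Rightarrow> nat \<Rightarrow> nat \<Rightarrow> 'k::field" where
  "xH n = (\<lambda>i j. if i = 1 \<and> j = 0 \<and> 1 < n then 1 else 0)"

definition gH :: "nat \<Rightarrow> nat \<Rightarrow> nat \<Rightarrow> 'k::field" where
  "gH n = (\<lambda>i j. if i = 0 \<and> j = 1 mod n then 1 else 0)"

definition ginvH :: "nat \<Rightarrow> nat \<Rightarrow> nat \<Rightarrow> 'k::field" where
  "ginvH n = (\<lambda>i j. if i = 0 \<and> j = n - 1 then 1 else 0)"

primrec powH :: "nat \<Rightarrow> 'k::field \<Rightarrow> (nat \<Rightarrow> nat \<Rightarrow> 'k) \<Rightarrow> nat \<Rightarrow> (nat \<Rightarrow> nat \<Rightarrow> 'k)" where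
  "powH n w p 0 = oneH n"
| "powH n w p (Suc k) = mulH n w p (powH n w p k)"

text \<open>Concrete model of A = k[z]/(z^n - w) via its basis u^m (m < n):
  u^m1 * u^m2 = w^((m1+m2) div n) u^((m1+m2) mod n).\<close>
definition cA :: "nat \<Rightarrow> 'k::field \<Rightarrow> nat \<Rightarrow> nat \<Rightarrow> nat \<Rightarrow> 'k" where
  "cA n w m1 m2 m = (if (m1 + m2) mod n = m then w ^ ((m1 + m2) div n) else 0)"

definition mulA :: "nat \<Rightarrow> 'k::field \<Rightarrow> (nat \<Rightarrow> 'k) \<Rightarrow> (nat \<Rightarrow> 'k) \<Rightarrow> (nat \<Rightarrow> 'k)" where
  "mulA n w a b = (\<lambda>m. if m < n then (\<Sum>m1<n. \<Sum>m2<n. cA n w m1 m2 m * a m1 * b m2) else 0)"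

definition oneA :: "nat \<Rightarrow> nat \<Rightarrow> 'k::field" where
  "oneA n = (\<lambda>m. if m = 0 then 1 else 0)"

text \<open>u = image of z, i.e. z reduced: w^(1 div n) u^(1 mod n).\<close>
definition uA :: "nat \<Rightarrow> 'k::field \<Rightarrow> nat \<Rightarrow> 'k" where
  "uA n w = (\<lambda>m. if m = 1 mod n then w ^ (1 div n) else 0)"

primrec powA :: "nat \<Rightarrow> 'k::field \<Rightarrow> (nat \<Rightarrow> 'k) \<Rightarrow> nat \<Rightarrow> (nat \<Rightarrow> 'k)" where
  "powA n w a 0 = oneA n"
| "powA n w a (Suc k) = mulA n w a (powA n w a k)"

text \<open>Tensor product algebra H \<otimes> A with basis x^i g^j \<otimes> u^m (i,j,m < n);
  an element is its coefficient function F i j m.  Multiplication is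
  (h \<otimes> a)(h' \<otimes> a') = h h' \<otimes> a a', i.e. structure constants cH * cA.\<close>
definition tens :: "(nat \<Rightarrow> nat \<Rightarrow> 'k::field) \<Rightarrow> (nat \<Rightarrow> 'k) \<Rightarrow> nat \<Rightarrow> nat \<Rightarrow> nat \<Rightarrow> 'k" where
  "tens p a = (\<lambda>i j m. p i j * a m)"

definition mulHA :: "nat \<Rightarrow> 'k::field \<Rightarrow> (nat \<Rightarrow> nat \<Rightarrow> nat \<Rightarrow> 'k) \<Rightarrow> (nat \<Rightarrow> nat \<Rightarrow> nat \<Rightarrow> 'k)
     \<Rightarrow> (nat \<Rightarrow> nat \<Rightarrow> nat \<Rightarrow> 'k)" where
  "mulHA n w F G = (\<lambda>i j m. if i < n \<and> j < n \<and> m < n then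
      (\<Sum>i1<n. \<Sum>j1<n. \<Sum>m1<n. \<Sum>i2<n. \<Sum>j2<n. \<Sum>m2<n.
         cH n w i1 j1 i2 j2 i j * cA n w m1 m2 m * F i1 j1 m1 * G i2 j2 m2) else 0)"

definition oneHA :: "nat \<Rightarrow> nat \<Rightarrow> nat \<Rightarrow> nat \<Rightarrow> 'k::field" where
  "oneHA n = tens (oneH n) (oneA n)"

primrec powHA :: "nat \<Rightarrow> 'k::field \<Rightarrow> (nat \<Rightarrow> nat \<Rightarrow> nat \<Rightarrow> 'k) \<Rightarrow> nat \<Rightarrow> (nat \<Rightarrow> nat \<Rightarrow> nat \<Rightarrow> 'k)" where
  "powHA n w F 0 = oneHA n"
| "powHA n w F (Suc k) = mulHA n w F (powHA n w F k)"

definition taft_a :: "'k::field \<Rightarrow> nat \<Rightarrow> 'k" where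
  "taft_a w i = (w - 1) ^ i * w ^ (i * (i + 1) div 2)"

definition rho :: "nat \<Rightarrow> 'k::field \<Rightarrow> nat \<Rightarrow> nat \<Rightarrow> nat \<Rightarrow> 'k" where
  "rho n w = (\<lambda>i j m. \<Sum>l<n. taft_a w l *
      tens (mulH n w (powH n w (xH n) l) (powH n w (ginvH n) (l + 1))) (powA n w (uA n w) (l + 1)) i j m)"

end

theory Submission
  imports Defs
begin


definition mon :: "nat \<Rightarrow> 'k::field \<Rightarrow> nat \<Rightarrow> nat \<Rightarrow> nat \<Rightarrow> nat \<Rightarrow> nat \<Rightarrow> nat \<Rightarrow> 'k" where
  "mon n w k J M = (\<lambda>i j m. if i = k \<and> j = J mod n \<and> m = M mod n \<and> k < n then w ^ (M div n) else 0)"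

lemma sum_single: "(\<And>x. x \<noteq> a \<Longrightarrow> f x = 0) \<Longrightarrow> a < (n::nat) \<Longrightarrow> sum f {..<n} = f a"
proof -
  assume h: "\<And>x. x \<noteq> a \<Longrightarrow> f x = 0" "a < n"
  have "sum f {..<n} = f a + sum f ({..<n} - {a})" using h(2) by (intro sum.remove) auto
  also have "sum f ({..<n} - {a}) = 0" using h(1) by (intro sum.neutral) auto
  finally show ?thesis by simp
qed

lemma cA_mod: "n > 0 \<Longrightarrow> cA n w (M1 mod n) (M2 mod n) ((M1+M2) mod n) * w^(M1 div n) * w^(M2 div n) = w ^ ((M1+M2) div n)"
proof -
  assume n: "n > 0"
  have "(M1+M2) div n = M1 div n + M2 div n + (M1 mod n + M2 mod n) div n"
    by (metis div_add1_eq)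
  moreover have "(M1 mod n + M2 mod n) mod n = (M1+M2) mod n" by (simp add: mod_add_eq)
  ultimately show ?thesis unfolding cA_def by (simp add: power_add)
qed

lemma mulHA_mon:
  assumes n: "n > 0"
  shows "mulHA n w (mon n w k1 J1 M1) (mon n w k2 J2 M2) i j m =
    (if k1 + k2 < n then inverse w ^ ((J1 mod n) * k2) * mon n w (k1+k2) (J1+J2) (M1+M2) i j m else 0)"
proof (cases "k1 < n \<and> k2 < n")
  case False
  then show ?thesis unfolding mulHA_def mon_def by auto
next
  case True
  have "mulHA n w (mon n w k1 J1 M1) (mon n w k2 J2 M2) i j m =
    (if i < n \<and> j < n \<and> m < n then
      cH n w k1 (J1 mod n) k2 (J2 mod n) i j * cA n w (M1 mod n) (M2 mod n) m * w ^ (M1 div n) * w ^ (M2 div n) else 0)"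
    unfolding mulHA_def mon_def
    apply (subst sum_single[where a="M2 mod n"], simp, simp add: n)
    apply (subst sum_single[where a="J2 mod n"], simp, simp add: n)
    apply (subst sum_single[where a=k2], simp, simp add: True)
    apply (subst sum_single[where a="M1 mod n"], simp, simp add: n)
    apply (subst sum_single[where a="J1 mod n"], simp, simp add: n)
    apply (subst sum_single[where a=k1], simp, simp add: True)
    using True by simp
  also have "\<dots> = (if k1 + k2 < n then inverse w ^ ((J1 mod n) * k2) * mon n w (k1+k2) (J1+J2) (M1+M2) i j m else 0)"
  proof -
    have cA': "cA n w (M1 mod n) (M2 mod n) m * w ^ (M1 div n) * w ^ (M2 div n) =
       (if m = (M1+M2) mod n then w ^ ((M1 + M2) div n) else 0)"
      using cA_mod[OF n, of w M1 M2] unfolding cA_def by (auto simp: mod_add_eq)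
    have cH': "cH n w k1 (J1 mod n) k2 (J2 mod n) i j =
       (if i = k1 + k2 \<and> j = (J1+J2) mod n then inverse w ^ ((J1 mod n) * k2) else 0)"
      unfolding cH_def by (auto simp: mod_add_eq)
    show ?thesis
      unfolding mult.assoc[symmetric, of "cH n w k1 (J1 mod n) k2 (J2 mod n) i j"]
      unfolding mult.assoc[of "cH n w k1 (J1 mod n) k2 (J2 mod n) i j * cA n w (M1 mod n) (M2 mod n) m"]
      unfolding mult.assoc[of "cH n w k1 (J1 mod n) k2 (J2 mod n) i j"]
      unfolding mult.assoc[symmetric, of "cA n w (M1 mod n) (M2 mod n) m"]
      unfolding cA' cH' mon_def using n by auto
  qed
  finally show ?thesis .
qed

definition hm :: "nat \<Rightarrow> nat \<Rightarrow> nat \<Rightarrow> nat \<Rightarrow> nat \<Rightarrow> 'k::field" where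
  "hm n k J = (\<lambda>i j. if i = k \<and> j = J mod n \<and> k < n then 1 else 0)"

definition am :: "nat \<Rightarrow> 'k::field \<Rightarrow> nat \<Rightarrow> nat \<Rightarrow> 'k" where
  "am n w M = (\<lambda>m. if m = M mod n then w ^ (M div n) else 0)"

lemma mulH_hm:
  assumes n: "n > 0"
  shows "mulH n w (hm n k1 J1) (hm n k2 J2) i j =
    (if k1 + k2 < n then inverse w ^ ((J1 mod n) * k2) * hm n (k1+k2) (J1+J2) i j else 0)"
proof (cases "k1 < n \<and> k2 < n")
  case False
  then show ?thesis unfolding mulH_def hm_def by auto
next
  case True
  have "mulH n w (hm n k1 J1) (hm n k2 J2) i j =
    (if i < n \<and> j < n then cH n w k1 (J1 mod n) k2 (J2 mod n) i j else 0)"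
    unfolding mulH_def hm_def
    apply (subst sum_single[where a="J2 mod n"], simp, simp add: n)
    apply (subst sum_single[where a=k2], simp, simp add: True)
    apply (subst sum_single[where a="J1 mod n"], simp, simp add: n)
    apply (subst sum_single[where a=k1], simp, simp add: True)
    using True by simp
  also have "\<dots> = (if k1 + k2 < n then inverse w ^ ((J1 mod n) * k2) * hm n (k1+k2) (J1+J2) i j else 0)"
    unfolding cH_def hm_def using n by (auto simp: mod_add_eq)
  finally show ?thesis .
qed

lemma mulA_am:
  assumes n: "n > 0"
  shows "mulA n w (am n w M1) (am n w M2) = am n w (M1 + M2)"
proof
  fix m
  have "mulA n w (am n w M1) (am n w M2) m =
    (if m < n then cA n w (M1 mod n) (M2 mod n) m * w ^ (M1 div n) * w ^ (M2 div n) else 0)"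
    unfolding mulA_def am_def
    apply (subst sum_single[where a="M2 mod n"], simp, simp add: n)
    apply (subst sum_single[where a="M1 mod n"], simp, simp add: n)
    by simp
  also have "\<dots> = am n w (M1 + M2) m"
    using cA_mod[OF n, of w M1 M2] n unfolding cA_def am_def by (auto simp: mod_add_eq)
  finally show "mulA n w (am n w M1) (am n w M2) m = am n w (M1 + M2) m" .
qed

lemma powH_x: "n > 0 \<Longrightarrow> powH n w (xH n) k = hm n k 0"
proof (induction k)
  case 0 then show ?case by (auto simp: oneH_def hm_def)
next
  case (Suc k)
  have x: "xH n = hm n 1 0" by (auto simp: xH_def hm_def)
  show ?case using Suc by (auto simp: x mulH_hm intro!: ext) (auto simp: hm_def)
qed

lemma powH_ginv: "n > 0 \<Longrightarrow> powH n w (ginvH n) t = hm n 0 (t * (n - 1))"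
proof (induction t)
  case 0 then show ?case by (auto simp: oneH_def hm_def)
next
  case (Suc t)
  have x: "ginvH n = hm n 0 (n - 1)" using Suc.prems by (auto simp: ginvH_def hm_def)
  show ?case using Suc by (auto simp: x mulH_hm intro!: ext)
qed

lemma powA_u: "n > 0 \<Longrightarrow> powA n w (uA n w) M = am n w M"
proof (induction M)
  case 0 then show ?case by (auto simp: oneA_def am_def)
next
  case (Suc M)
  have x: "uA n w = am n w 1" by (auto simp: uA_def am_def)
  show ?case using Suc by (simp add: x mulA_am)
qed

lemma mulH_x_g: "n > 0 \<Longrightarrow> mulH n w (hm n k 0) (hm n 0 J) = hm n k J"
  by (auto simp: mulH_hm intro!: ext) (auto simp: hm_def)

lemma tens_mon: "tens (hm n k J) (am n w M) = mon n w k J M"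
  by (auto simp: tens_def hm_def am_def mon_def intro!: ext)

lemma basis_eq: "n > 0 \<Longrightarrow> tens (mulH n w (powH n w (xH n) k) (powH n w (ginvH n) t)) (powA n w (uA n w) M)
   = mon n w k (t * (n - 1)) M"
  by (simp add: powH_x powH_ginv powA_u mulH_x_g tens_mon)

lemma mulHA_add_left:
  "mulHA n w (\<lambda>i j m. a * F i j m + G i j m) H i j m = a * mulHA n w F H i j m + mulHA n w G H i j m"
  unfolding mulHA_def by (auto simp: sum.distrib sum_distrib_left algebra_simps)

lemma mulHA_add_right:
  "mulHA n w H (\<lambda>i j m. a * F i j m + G i j m) i j m = a * mulHA n w H F i j m + mulHA n w H G i j m"
  unfolding mulHA_def by (auto simp: sum.distrib sum_distrib_left algebra_simps)

lemma mulHA_sum_left: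
  "finite L \<Longrightarrow> mulHA n w (\<lambda>i j m. \<Sum>l\<in>L. c l * F l i j m) G i j m = (\<Sum>l\<in>L. c l * mulHA n w (F l) G i j m)"
proof (induction L rule: finite_induct)
  case empty then show ?case by (simp add: mulHA_def)
next
  case (insert x L)
  then show ?case by (simp add: mulHA_add_left)
qed

lemma mulHA_sum_right:
  "finite L \<Longrightarrow> mulHA n w G (\<lambda>i j m. \<Sum>l\<in>L. c l * F l i j m) i j m = (\<Sum>l\<in>L. c l * mulHA n w G (F l) i j m)"
proof (induction L rule: finite_induct)
  case empty then show ?case by (simp add: mulHA_def)
next
  case (insert x L)
  then show ?case by (simp add: mulHA_add_right)
qed



definition Sset :: "nat \<Rightarrow> nat \<Rightarrow> (nat \<Rightarrow> nat) set" where
  "Sset s K = {f \<in> PiE {1..s} (\<lambda>_. {0..K}). (\<Sum>j\<in>{1..s}. f j) = K}"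

definition Exq :: "nat \<Rightarrow> (nat \<Rightarrow> nat) \<Rightarrow> nat" where
  "Exq s f = (\<Sum>j\<in>{2..s}. f j * (j - 1))"

fun Cf :: "'k::field \<Rightarrow> nat \<Rightarrow> nat \<Rightarrow> 'k" where
  "Cf w 0 K = (if K = 0 then 1 else 0)"
| "Cf w (Suc s) K = (\<Sum>l\<le>K. w ^ (K - l) * Cf w s (K - l))"

lemma sum_2_1: "h (1::nat) = (0::nat) \<Longrightarrow> (\<Sum>j\<in>{2..s}. h j) = (\<Sum>j\<in>{1..s}. h j)"
proof (cases s)
  case 0 then show ?thesis by simp
next
  case (Suc t)
  assume h: "h 1 = 0"
  have "{1..s} = insert 1 {2..s}" using Suc by auto
  then show ?thesis using h by simp
qed

lemma finite_Sset: "finite (Sset s K)"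
proof -
  have "finite (PiE {1..s} (\<lambda>_. {0..K}))" by (simp add: finite_PiE)
  then show ?thesis unfolding Sset_def by (rule finite_subset[rotated]) blast
qed

lemma Ex_comb:
  "Exq (Suc s) f = (\<Sum>j\<in>{1..s}. f (Suc j) * j)"
proof -
  have e: "{2..Suc s} = {Suc 1..Suc s}" by simp
  show ?thesis unfolding Exq_def e sum.shift_bounds_cl_Suc_ivl by simp
qed

lemma Cf_eq: "Cf w s K = (\<Sum>f\<in>Sset s K. w ^ Exq s f)"
proof (induction s arbitrary: K)
  case 0
  have "Sset 0 K = (if K = 0 then {\<lambda>_. undefined} else {})" unfolding Sset_def by auto
  then show ?case by (simp add: Exq_def)
next
  case (Suc s)
  define comb where "comb = (\<lambda>(l::nat, g::nat \<Rightarrow> nat) j. if j = 1 then l else if j \<in> {2..Suc s} then g (j - 1) else undefined)"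
  define spl where "spl = (\<lambda>f::nat \<Rightarrow> nat. (f 1, \<lambda>j. if j \<in> {1..s} then f (Suc j) else undefined))"
  have sumS: "(\<Sum>j\<in>{1..Suc s}. f j) = f 1 + (\<Sum>j\<in>{1..s}. f (Suc j))" for f :: "nat \<Rightarrow> nat"
  proof -
    have "(\<Sum>j\<in>{1..Suc s}. f j) = f 1 + (\<Sum>j\<in>{Suc 1..Suc s}. f j)" by (rule sum.atLeast_Suc_atMost) simp
    also have "(\<Sum>j\<in>{Suc 1..Suc s}. f j) = (\<Sum>j\<in>{1..s}. f (Suc j))" by (rule sum.shift_bounds_cl_Suc_ivl)
    finally show ?thesis .
  qed
  have "(\<Sum>f\<in>Sset (Suc s) K. w ^ Exq (Suc s) f) = (\<Sum>(l,g)\<in>Sigma {..K} (\<lambda>l. Sset s (K - l)). w ^ (Exq s g + (K - l)))"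
  proof (rule sum.reindex_bij_witness[where i=comb and j=spl])
    fix f assume fS: "f \<in> Sset (Suc s) K"
    have fP: "f \<in> PiE {1..Suc s} (\<lambda>_. {0..K})" and fsum: "(\<Sum>j\<in>{1..Suc s}. f j) = K"
      using fS unfolding Sset_def by auto
    define g where "g = (\<lambda>j. if j \<in> {1..s} then f (Suc j) else undefined)"
    have spl_f: "spl f = (f 1, g)" unfolding spl_def g_def by simp
    have gsum: "(\<Sum>j\<in>{1..s}. g j) = K - f 1"
    proof -
      have "(\<Sum>j\<in>{1..s}. g j) = (\<Sum>j\<in>{1..s}. f (Suc j))" unfolding g_def by (rule sum.cong) auto
      then show ?thesis using fsum sumS[of f] by simp
    qed
    show "comb (spl f) = f"
    proof
      fix j
      show "comb (spl f) j = f j"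
      proof (cases "j \<in> {1..Suc s}")
        case True
        then show ?thesis unfolding spl_f comb_def g_def by auto
      next
        case False
        then have "f j = undefined" using fP by (auto simp: PiE_def extensional_def)
        then show ?thesis using False unfolding spl_f comb_def g_def by auto
      qed
    qed
    have gle: "g j \<le> K - f 1" if "j \<in> {1..s}" for j
    proof -
      have "g j \<le> (\<Sum>j\<in>{1..s}. g j)" using that by (intro member_le_sum) auto
      then show ?thesis using gsum by simp
    qed
    have gP: "g \<in> PiE {1..s} (\<lambda>_. {0..K - f 1})"
      using gle unfolding g_def by (auto simp: PiE_def extensional_def)
    have f1: "f 1 \<le> K" using fsum sumS[of f] by simp
    show "spl f \<in> Sigma {..K} (\<lambda>l. Sset s (K - l))"
      unfolding spl_f Sset_def using f1 gP gsum by auto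
    have "Exq s g = (\<Sum>j\<in>{1..s}. f (Suc j) * (j - 1))"
      unfolding Exq_def by (subst sum_2_1) (auto simp: g_def intro!: sum.cong)
    then have "Exq s g + (K - f 1) = (\<Sum>j\<in>{1..s}. f (Suc j) * (j - 1) + f (Suc j))"
      using gsum fsum sumS[of f] by (simp add: sum.distrib)
    also have "\<dots> = Exq (Suc s) f" unfolding Ex_comb
      apply (rule sum.cong[OF refl])
      subgoal for x by (cases x) auto
      done
    finally show "(case spl f of (l, g) \<Rightarrow> w ^ (Exq s g + (K - l))) = w ^ Exq (Suc s) f"
      unfolding spl_f by simp
  next
    fix b assume bS: "b \<in> Sigma {..K} (\<lambda>l. Sset s (K - l))"
    obtain l g where b: "b = (l, g)" by force
    have lK: "l \<le> K" and gP: "g \<in> PiE {1..s} (\<lambda>_. {0..K - l})" and gsum: "(\<Sum>j\<in>{1..s}. g j) = K - l"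
      using bS unfolding b Sset_def by auto
    show "spl (comb b) = b"
    proof -
      have "(\<lambda>j. if j \<in> {1..s} then comb (l, g) (Suc j) else undefined) = g"
      proof
        fix j show "(if j \<in> {1..s} then comb (l, g) (Suc j) else undefined) = g j"
          using gP by (cases "j \<in> {1..s}") (auto simp: comb_def PiE_def extensional_def)
      qed
      then show ?thesis unfolding b spl_def by (simp add: comb_def)
    qed
    have cP: "comb (l, g) \<in> PiE {1..Suc s} (\<lambda>_. {0..K})"
    proof -
      have "g (j - 1) \<le> K" if "j \<in> {2..Suc s}" for j
      proof -
        have "j - 1 \<in> {1..s}" using that by auto
        then have "g (j - 1) \<le> K - l" using gP by (auto simp: PiE_def Pi_def)
        then show ?thesis by simp
      qed
      then show ?thesis using lK by (auto simp: comb_def PiE_def extensional_def)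
    qed
    have "(\<Sum>j\<in>{1..Suc s}. comb (l, g) j) = l + (\<Sum>j\<in>{1..s}. g j)"
      unfolding sumS by (auto simp: comb_def intro!: sum.cong)
    then show "comb b \<in> Sset (Suc s) K" unfolding b Sset_def using cP gsum lK by simp
  qed
  also have "\<dots> = (\<Sum>l\<le>K. w ^ (K - l) * (\<Sum>g\<in>Sset s (K - l). w ^ Exq s g))"
    by (simp add: sum.Sigma[symmetric] finite_Sset sum_distrib_left power_add mult.commute)
  also have "\<dots> = Cf w (Suc s) K" using Suc by simp
  finally show ?case by simp
qed


lemma tri: "(n::nat) * (n + 1) div 2 + k * (k + 1) div 2 + n * k = (n + k) * (n + k + 1) div 2"
proof -
  have ev: "2 * (x * (x + 1) div 2) = x * (x + 1)" for x :: nat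
  proof -
    have "even (x * (x + 1))" by simp
    then show ?thesis by (metis dvd_mult_div_cancel)
  qed
  have a: "2 * (n * (n + 1) div 2) = n * (n + 1)" by (rule ev)
  have b: "2 * (k * (k + 1) div 2) = k * (k + 1)" by (rule ev)
  have c: "2 * ((n + k) * (n + k + 1) div 2) = (n + k) * (n + k + 1)" by (rule ev)
  have "2 * (n * (n + 1) div 2 + k * (k + 1) div 2 + n * k) = 2 * (n * (n + 1) div 2) + 2 * (k * (k + 1) div 2) + 2 * (n * k)"
    by (simp only: distrib_left)
  also have "\<dots> = n * (n + 1) + k * (k + 1) + 2 * (n * k)" by (simp only: a b)
  also have "\<dots> = (n + k) * (n + k + 1)" by (simp add: algebra_simps)
  also have "\<dots> = 2 * ((n + k) * (n + k + 1) div 2)" by (rule c[symmetric])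
  finally show ?thesis by (metis mult_cancel_left zero_neq_numeral)
qed

lemma taft_mul: "taft_a w l * taft_a w k * w ^ ((l + 1) * k) = taft_a w (l + k) * w ^ k"
proof -
  have e: "l * (l + 1) div 2 + k * (k + 1) div 2 + (l + 1) * k = (l + k) * (l + k + 1) div 2 + k"
    using tri[of l k] by (simp add: algebra_simps)
  have "taft_a w l * taft_a w k * w ^ ((l + 1) * k) =
      (w - 1) ^ (l + k) * w ^ (l * (l + 1) div 2 + k * (k + 1) div 2 + (l + 1) * k)"
    unfolding taft_a_def power_add by (simp add: ac_simps)
  also have "\<dots> = taft_a w (l + k) * w ^ k" unfolding e taft_a_def power_add by (simp add: ac_simps)
  finally show ?thesis .
qed

lemma pow_mod: "w ^ n = (1::'k::field) \<Longrightarrow> w ^ a = w ^ (a mod n)"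
proof -
  assume h: "w ^ n = 1"
  have "w ^ a = w ^ (n * (a div n) + a mod n)" by simp
  also have "\<dots> = w ^ (a mod n)" unfolding power_add power_mult h by simp
  finally show ?thesis .
qed

lemma inv_pow:
  assumes h: "w ^ n = (1::'k::field)" and n: "n > 0"
  shows "inverse w ^ (((l + 1) * (n - 1) mod n) * k) = w ^ ((l + 1) * k)"
proof -
  have w0: "w \<noteq> 0" using h n by (auto simp: power_0_left)
  have "(((l + 1) * (n - 1) mod n) * k + (l + 1) * k) mod n = ((l + 1) * (n - 1) * k + (l + 1) * k) mod n"
    by (metis mod_add_left_eq mod_mult_left_eq)
  also have "(l + 1) * (n - 1) * k + (l + 1) * k = ((l + 1) * k) * n"
    using n by (cases n) (auto simp: algebra_simps)
  finally have z: "(((l + 1) * (n - 1) mod n) * k + (l + 1) * k) mod n = 0" by simp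
  have "w ^ (((l + 1) * (n - 1) mod n) * k) * w ^ ((l + 1) * k) = w ^ ((((l + 1) * (n - 1) mod n) * k + (l + 1) * k) mod n)"
    unfolding power_add[symmetric] by (rule pow_mod[OF h])
  also have "\<dots> = 1" by (simp only: z power_0)
  finally have "w ^ (((l + 1) * (n - 1) mod n) * k) * w ^ ((l + 1) * k) = 1" .
  then show ?thesis using w0 by (simp add: power_inverse field_simps)
qed

definition rhoM :: "nat \<Rightarrow> 'k::field \<Rightarrow> nat \<Rightarrow> nat \<Rightarrow> nat \<Rightarrow> 'k" where
  "rhoM n w = (\<lambda>i j m. \<Sum>l<n. taft_a w l * mon n w l ((l + 1) * (n - 1)) (l + 1) i j m)"

definition TT :: "nat \<Rightarrow> 'k::field \<Rightarrow> nat \<Rightarrow> nat \<Rightarrow> nat \<Rightarrow> nat \<Rightarrow> 'k" where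
  "TT n w s = (\<lambda>i j m. \<Sum>k<n. (taft_a w k * Cf w s k) * mon n w k ((k + s) * (n - 1)) (k + s) i j m)"

lemma rho_eq: assumes n: "n > 0" shows "rho n w = rhoM n w"
  unfolding rho_def rhoM_def basis_eq[OF n] by (rule refl)

lemma pow_TT:
  assumes h: "w ^ n = (1::'k::field)" and n: "n > 0"
  shows "powHA n w (rhoM n w) s = TT n w s"
proof (induction s)
  case 0
  have "TT n w 0 = mon n w 0 0 0"
  proof (intro ext)
    fix i j m
    have "TT n w 0 i j m = (\<Sum>k<n. if k = 0 then mon n w k ((k + 0) * (n - 1)) (k + 0) i j m else 0)"
      unfolding TT_def by (intro sum.cong) (auto simp: taft_a_def)
    also have "\<dots> = mon n w 0 0 0 i j m" using n by (simp add: sum.delta)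
    finally show "TT n w 0 i j m = mon n w 0 0 0 i j m" .
  qed
  moreover have "oneHA n = mon n w 0 0 0"
    using n by (auto simp: oneHA_def tens_def oneH_def oneA_def mon_def intro!: ext)
  ultimately show ?case by simp
next
  case (Suc s)
  show ?case
  proof (intro ext)
    fix i j m
    define G where "G = (\<lambda>l k. taft_a w (l + k) * (w ^ k * Cf w s k) *
        mon n w (l + k) ((l + k + Suc s) * (n - 1)) (l + k + Suc s) i j m)"
    have "powHA n w (rhoM n w) (Suc s) i j m = mulHA n w (rhoM n w) (TT n w s) i j m"
      using Suc by simp
    also have "\<dots> = (\<Sum>l<n. taft_a w l * (\<Sum>k<n. (taft_a w k * Cf w s k) *
        mulHA n w (mon n w l ((l + 1) * (n - 1)) (l + 1)) (mon n w k ((k + s) * (n - 1)) (k + s)) i j m))"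
      unfolding rhoM_def TT_def by (simp add: mulHA_sum_left mulHA_sum_right)
    also have "\<dots> = (\<Sum>l<n. \<Sum>k<n. if l + k < n then G l k else 0)"
    proof (intro sum.cong refl)
      fix l k
      show "taft_a w l * (\<Sum>k<n. (taft_a w k * Cf w s k) *
        mulHA n w (mon n w l ((l + 1) * (n - 1)) (l + 1)) (mon n w k ((k + s) * (n - 1)) (k + s)) i j m)
        = (\<Sum>k<n. if l + k < n then G l k else 0)"
        unfolding sum_distrib_left
      proof (intro sum.cong refl)
        fix k
          have e2: "l + 1 + (k + s) = l + k + Suc s" by simp
          have e1: "(l + 1) * (n - 1) + (k + s) * (n - 1) = (l + k + Suc s) * (n - 1)"
            by (simp only: add_mult_distrib[symmetric] e2)
        have tm: "taft_a w l * (taft_a w k * Cf w s k) * w ^ ((l + 1) * k) = taft_a w (l + k) * (w ^ k * Cf w s k)"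
          using taft_mul[of w l k] by (simp add: ac_simps)
        show "taft_a w l * ((taft_a w k * Cf w s k) *
          mulHA n w (mon n w l ((l + 1) * (n - 1)) (l + 1)) (mon n w k ((k + s) * (n - 1)) (k + s)) i j m)
          = (if l + k < n then G l k else 0)"
        proof (cases "l + k < n")
          case True
          define X where "X = mon n w (l + k) ((l + k + Suc s) * (n - 1)) (l + k + Suc s) i j m"
          have "taft_a w l * ((taft_a w k * Cf w s k) * (w ^ ((l + 1) * k) * X)) =
             (taft_a w l * (taft_a w k * Cf w s k) * w ^ ((l + 1) * k)) * X" by (simp only: mult.assoc)
          moreover have "mulHA n w (mon n w l ((l + 1) * (n - 1)) (l + 1)) (mon n w k ((k + s) * (n - 1)) (k + s)) i j m
              = w ^ ((l + 1) * k) * X"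
            unfolding X_def by (simp only: mulHA_mon[OF n] inv_pow[OF h n] e1 e2 if_P[OF True])
          ultimately show ?thesis using True unfolding G_def X_def tm by simp
        qed (simp add: mulHA_mon[OF n])
      qed
    qed
    also have "\<dots> = (\<Sum>(l, k)\<in>{..<n} \<times> {..<n}. if l + k < n then G l k else 0)"
      by (simp add: sum.cartesian_product)
    also have "\<dots> = (\<Sum>(l, k)\<in>{(l, k). l + k < n}. G l k)"
    proof -
      have st: "{x \<in> {..<n} \<times> {..<n}. case x of (l, k) \<Rightarrow> l + k < n} = {(l, k). l + k < n}" by auto
      have "(\<Sum>(l, k)\<in>{..<n} \<times> {..<n}. if l + k < n then G l k else 0) =
         (\<Sum>x\<in>{..<n} \<times> {..<n}. if (case x of (l, k) \<Rightarrow> l + k < n) then (case x of (l, k) \<Rightarrow> G l k) else 0)"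
        by (intro sum.cong) auto
      also have "\<dots> = (\<Sum>x\<in>{x \<in> {..<n} \<times> {..<n}. case x of (l, k) \<Rightarrow> l + k < n}. case x of (l, k) \<Rightarrow> G l k)"
        by (rule sum.inter_filter[symmetric, where A="{..<n} \<times> {..<n}" and g="\<lambda>x. case x of (l, k) \<Rightarrow> G l k" and P="\<lambda>x. case x of (l, k) \<Rightarrow> l + k < n"]) simp
      finally show ?thesis unfolding st .
    qed
    also have "\<dots> = (\<Sum>K<n. \<Sum>l\<le>K. G l (K - l))" by (rule sum.triangle_reindex)
    also have "\<dots> = TT n w (Suc s) i j m"
      unfolding TT_def
    proof (intro sum.cong refl)
      fix K assume "K \<in> {..<n}"
      have "(\<Sum>l\<le>K. G l (K - l)) = (\<Sum>l\<le>K. taft_a w K * (w ^ (K - l) * Cf w s (K - l)) *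
          mon n w K ((K + Suc s) * (n - 1)) (K + Suc s) i j m)"
        unfolding G_def by (intro sum.cong refl) simp
      also have "\<dots> = taft_a w K * Cf w (Suc s) K * mon n w K ((K + Suc s) * (n - 1)) (K + Suc s) i j m"
        by (simp only: sum_distrib_right[symmetric] sum_distrib_left[symmetric] Cf.simps)
      finally show "(\<Sum>l\<le>K. G l (K - l)) = taft_a w K * Cf w (Suc s) K * mon n w K ((K + Suc s) * (n - 1)) (K + Suc s) i j m" .
    qed
    finally show "powHA n w (rhoM n w) (Suc s) i j m = TT n w (Suc s) i j m" .
  qed
qed


theorem proposition3p6:
  fixes w :: "'k::field_char_0" and n s :: nat
  assumes "primitive_root n w" and "1 \<le> s" and "s \<le> n"
  shows "powHA n w (rho n w) s =
    (\<lambda>i j m. \<Sum>k<n. taft_a w k *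
       (\<Sum>f\<in>{f \<in> PiE {1..s} (\<lambda>_. {0..k}). (\<Sum>j\<in>{1..s}. f j) = k}.
           w ^ (\<Sum>j\<in>{2..s}. f j * (j - 1))) *
       tens (mulH n w (powH n w (xH n) k) (powH n w (ginvH n) (k + s)))
            (powA n w (uA n w) (k + s)) i j m)"
proof -
  have n: "n > 0" and h: "w ^ n = 1" using assms(1) unfolding primitive_root_def by auto
  have "powHA n w (rho n w) s = TT n w s" unfolding rho_eq[OF n] by (rule pow_TT[OF h n])
  also have "TT n w s = (\<lambda>i j m. \<Sum>k<n. taft_a w k *
       (\<Sum>f\<in>{f \<in> PiE {1..s} (\<lambda>_. {0..k}). (\<Sum>j\<in>{1..s}. f j) = k}.
           w ^ (\<Sum>j\<in>{2..s}. f j * (j - 1))) *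
       tens (mulH n w (powH n w (xH n) k) (powH n w (ginvH n) (k + s)))
            (powA n w (uA n w) (k + s)) i j m)"
    unfolding TT_def basis_eq[OF n] Cf_eq Sset_def Exq_def by (rule refl)
  finally show ?thesis .
qed

end
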